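(* Fix $a>0$. Let $\mu$ be a probability measure on $\mathbb{R}_+^\infty$ and $(\mathbf{U},\mathbf{V}_a)$ a coupling of $\mu$ and $\pi_a$ such that almost surely $\limsup_{d\to\infty}\frac{\log\log d}{\log d}\sum_{i=1}^d|V_{a,i}-U_i|=0$ and $\limsup_{d\to\infty}\frac{U_d}{dV_{a,d}}<\infty$. Then, almost surely, there exists $i_0\ge2$ such that $s(\mathbf{U})_i\ge(4a)^{-1}\log i$ for all $i\ge i_0$. Moreover $s(\mathbf{U})$, $s(\mathbf{U}\wedge\mathbf{V}_a)$ and $s(\mathbf{V}_a)$ all satisfy the summability condition $\sum_i e^{-\alpha s(\cdot)_i^2}<\infty$ for all $\alpha>0$ almost surely; in particular $\mu\in\mathcal{S}$.
   Context: $\pi_a=\bigotimes_{i\ge1}\operatorname{Exp}(2+ia)$ with $\operatorname{Exp}(\lambda)$ the exponential law of rate $\lambda$. For $\mathbf{v}=(v_1,v_2,\dots)\in\mathbb{R}_+^\infty$, $s(\mathbf{v})$ is the vector with $i$-th coordinate $v_1+\cdots+v_i$; $\wedge$ is the coordinatewise minimum. $\mathcal{S}$ is the set of laws of gap vectors $(y_i-y_{i-1})_{i\ge1}$ of random sequences $0=y_0\le y_1\le\cdots$ with $\sum_ie^{-\alpha y_i^2}<\infty$ for all $\alpha>0$ a.s. (equivalently, laws of $\mathbf{v}$ with $s(\mathbf{v})$ satisfying this summability). *)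

theory Defs
  imports "HOL-Probability.Probability"
begin

text \<open>Sequences in R_+^infinity are modelled as nat => real, 0-based:
  coordinate n (n = 0,1,...) is the paper's coordinate n+1.\<close>

definition seq_space :: "(nat \<Rightarrow> real) measure" where
  "seq_space = PiM UNIV (\<lambda>_. borel)"

definition pi_a :: "real \<Rightarrow> (nat \<Rightarrow> real) measure" where
  "pi_a a = PiM UNIV (\<lambda>n. density lborel (exponential_density (2 + real (Suc n) * a)))"

text \<open>psums v i = v_1 + ... + v_i (the paper's s(v)_i for i >= 1; psums v 0 = 0 = y_0).\<close>
definition psums :: "(nat \<Rightarrow> real) \<Rightarrow> nat \<Rightarrow> real" where
  "psums v i = (\<Sum>k<i. v k)"

definition gauss_summable :: "(nat \<Rightarrow> real) \<Rightarrow> bool" where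
  "gauss_summable y \<longleftrightarrow> (\<forall>\<alpha>>0. summable (\<lambda>i. exp (- \<alpha> * (y i)\<^sup>2)))"

definition class_S :: "(nat \<Rightarrow> real) measure \<Rightarrow> bool" where
  "class_S \<mu> \<longleftrightarrow> prob_space \<mu> \<and> sets \<mu> = sets seq_space \<and>
     (AE v in \<mu>. (\<forall>n. 0 \<le> v n) \<and> gauss_summable (psums v))"

end

theory Submission
  imports Defs
begin

lemma laplace_exp:
  fixes l \<theta> :: real
  assumes l: "0 < l" and th: "0 \<le> \<theta>"
  shows "(\<integral>\<^sup>+x. ennreal (exp (- \<theta> * x)) \<partial>density lborel (exponential_density l)) = ennreal (l / (l + \<theta>))"
proof -
  have "(\<integral>\<^sup>+x. ennreal (exp (- \<theta> * x)) \<partial>density lborel (exponential_density l))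
      = (\<integral>\<^sup>+x. ennreal (exponential_density l x) * ennreal (exp (- \<theta> * x)) \<partial>lborel)"
    by (subst nn_integral_density) auto
  also have "\<dots> = (\<integral>\<^sup>+x. ennreal (l / (l + \<theta>)) * ennreal (exponential_density (l + \<theta>) x * x ^ 0) \<partial>lborel)"
  proof (intro nn_integral_cong)
    fix x :: real
    have "exponential_density l x * exp (- \<theta> * x) = (l / (l + \<theta>)) * (exponential_density (l + \<theta>) x * x ^ 0)"
      using l th by (auto simp: exponential_density_def field_simps mult_exp_exp)
    then show "ennreal (exponential_density l x) * ennreal (exp (- \<theta> * x)) = ennreal (l / (l + \<theta>)) * ennreal (exponential_density (l + \<theta>) x * x ^ 0)"
      using l th by (simp add: ennreal_mult'[symmetric] ennreal_mult[symmetric] exponential_density_nonneg)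
  qed
  also have "\<dots> = ennreal (l / (l + \<theta>)) * (\<integral>\<^sup>+x. ennreal (exponential_density (l + \<theta>) x * x ^ 0) \<partial>lborel)"
    by (rule nn_integral_cmult) auto
  also have "(\<integral>\<^sup>+x. ennreal (exponential_density (l + \<theta>) x * x ^ 0) \<partial>lborel) = 1"
    using nn_integral_erlang_ith_moment[of "l+\<theta>" 0 0] l th by simp
  finally show ?thesis by simp
qed

lemma pi_a_pps:
  assumes "a > 0"
  shows "product_prob_space (\<lambda>k. density lborel (exponential_density (2 + real (Suc k) * a)))"
  unfolding product_prob_space_def product_prob_space_axioms_def product_sigma_finite_def
  using prob_space_exponential_density assms
  by (auto intro!: prob_space_imp_sigma_finite prob_space_exponential_density add_pos_nonneg)

lemma pi_a_laplace:
  fixes a \<theta> :: real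
  assumes a: "a > 0" and th: "0 \<le> \<theta>"
  shows "(\<integral>\<^sup>+v. ennreal (\<Prod>k<n. exp (- \<theta> * v k)) \<partial>pi_a a)
     = ennreal (\<Prod>k<n. (2 + real (Suc k) * a) / ((2 + real (Suc k) * a) + \<theta>))"
proof -
  define Mk where "Mk = (\<lambda>k. density lborel (exponential_density (2 + real (Suc k) * a)))"
  interpret P: product_prob_space Mk UNIV
    unfolding Mk_def by (rule pi_a_pps[OF a])
  define f where "f = (\<lambda>x::nat \<Rightarrow> real. \<Prod>k\<in>{..<n}. ennreal (exp (- \<theta> * x k)))"
  have fm: "f \<in> borel_measurable (PiM {..<n} Mk)"
    unfolding f_def Mk_def by measurable
  have "(\<integral>\<^sup>+v. ennreal (\<Prod>k<n. exp (- \<theta> * v k)) \<partial>pi_a a) = (\<integral>\<^sup>+v. f (restrict v {..<n}) \<partial>PiM UNIV Mk)"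
    unfolding pi_a_def Mk_def f_def
    by (intro nn_integral_cong) (simp add: prod_ennreal)
  also have "\<dots> = (\<integral>\<^sup>+x. f x \<partial>distr (PiM UNIV Mk) (PiM {..<n} Mk) (\<lambda>v. restrict v {..<n}))"
    proof -
    have m: "(\<lambda>v. restrict v {..<n}) \<in> measurable (PiM UNIV Mk) (PiM {..<n} Mk)"
      by (rule measurable_restrict_subset) simp
    show ?thesis using fm m by (simp add: nn_integral_distr)
  qed
  also have "\<dots> = (\<integral>\<^sup>+x. f x \<partial>PiM {..<n} Mk)"
    by (subst P.distr_PiM_restrict_finite) auto
  also have "\<dots> = (\<Prod>k\<in>{..<n}. (\<integral>\<^sup>+x. ennreal (exp (- \<theta> * x)) \<partial>Mk k))"
    unfolding f_def by (rule P.product_nn_integral_prod) (auto simp: Mk_def)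
  also have "\<dots> = (\<Prod>k\<in>{..<n}. ennreal ((2 + real (Suc k) * a) / ((2 + real (Suc k) * a) + \<theta>)))"
    unfolding Mk_def
    by (intro prod.cong refl laplace_exp th) (use a in \<open>auto intro: add_pos_nonneg\<close>)
  also have "\<dots> = ennreal (\<Prod>k<n. (2 + real (Suc k) * a) / ((2 + real (Suc k) * a) + \<theta>))"
    using a th by (intro prod_ennreal) (auto intro!: divide_nonneg_nonneg add_nonneg_nonneg)
  finally show ?thesis .
qed

lemma gen_div: "(y::real) \<noteq> 0 \<Longrightarrow> y * (K / (y*y)) = K / y" by (simp add: field_simps)

lemma pi_a_prob: "a > 0 \<Longrightarrow> prob_space (pi_a a)"
  unfolding pi_a_def
  by (rule prob_space_PiM) (auto intro!: prob_space_exponential_density add_pos_nonneg)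

lemma telescope0:
  fixes x :: "nat \<Rightarrow> real"
  assumes p: "\<And>j. 0 < x j"
  shows "(\<Prod>k<n. x (k+1) / x (k+5)) = (x 1 * x 2 * x 3 * x 4) / (x (n+1) * x (n+2) * x (n+3) * x (n+4))"
proof (induction n)
  case 0
  have "x 1 * x 2 * x 3 * x 4 > 0" by (intro mult_pos_pos p)
  then show ?case using p[of 1] p[of 2] p[of 3] p[of 4] by (simp only: lessThan_0 prod.empty add_0) simp
next
  case (Suc n)
  have alg: "X / (A*B*C*D) * (A/E) = X / (B*C*D*E)" if "A > 0" "B > 0" "C > 0" "D > 0" "E > 0" for X A B C D E :: real
    using that by (simp add: field_simps)
  have e: "Suc n + 1 = n + 2" "Suc n + 2 = n+3" "Suc n + 3 = n+4" "Suc n + 4 = n + 5" "n + 1 + 4 = n+5" by simp_all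
  show ?case unfolding prod.lessThan_Suc Suc e by (rule alg) (rule p)+
qed

lemma telescope:
  fixes a :: real
  assumes a: "a > 0"
  shows "(\<Prod>k<n. (2 + real (Suc k) * a) / ((2 + real (Suc k) * a) + 4 * a))
    = ((2 + 1*a) * (2 + 2*a) * (2 + 3*a) * (2 + 4*a)) /
      ((2 + real (n+1) * a) * (2 + real (n+2) * a) * (2 + real (n+3) * a) * (2 + real (n+4) * a))"
proof -
  have p: "0 < 2 + real j * a" for j using a by (simp add: add_pos_nonneg)
  have e: "(2 + real (Suc k) * a) + 4 * a = 2 + real (k+5) * a" for k by (simp add: algebra_simps)
  show ?thesis using telescope0[of "\<lambda>j. 2 + real j * a" n, OF p] unfolding e by simp
qed

lemma pi_a_tail:
  fixes a :: real
  assumes a: "a > 0"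
  shows "\<exists>K. \<forall>n\<ge>1. measure (pi_a a) {v \<in> space (pi_a a). psums v n \<le> ln (real n) / (2 * a)} \<le> K / (real n)\<^sup>2"
proof -
  interpret N: prob_space "pi_a a" by (rule pi_a_prob[OF a])
  define K where "K = ((2 + 1*a) * (2 + 2*a) * (2 + 3*a) * (2 + 4*a)) / a^4"
  have "measure (pi_a a) {v \<in> space (pi_a a). psums v n \<le> ln (real n) / (2 * a)} \<le> K / (real n)\<^sup>2"
    if n: "n \<ge> 1" for n
  proof -
    define A where "A = {v \<in> space (pi_a a). psums v n \<le> ln (real n) / (2 * a)}"
    define t where "t = ln (real n) / (2 * a)"
    have Am: "A \<in> sets (pi_a a)"
      unfolding A_def psums_def pi_a_def by measurable
    have "emeasure (pi_a a) A = (\<integral>\<^sup>+v. indicator A v \<partial>pi_a a)"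
      using Am by simp
    also have "\<dots> \<le> (\<integral>\<^sup>+v. ennreal (exp (4*a*t)) * ennreal (\<Prod>k<n. exp (- (4*a) * v k)) \<partial>pi_a a)"
    proof (rule nn_integral_mono)
      fix v
      have pe: "(\<Prod>k<n. exp (- (4*a) * v k)) = exp (- (4*a) * psums v n)"
        unfolding psums_def by (simp add: exp_sum[symmetric] sum_distrib_left)
      show "indicator A v \<le> ennreal (exp (4*a*t)) * ennreal (\<Prod>k<n. exp (- (4*a) * v k))"
      proof (cases "v \<in> A")
        case True
        then have "psums v n \<le> t" unfolding A_def t_def by simp
        then have "0 \<le> 4*a*t + (- (4*a) * psums v n)" using a by (simp add: algebra_simps)
        then have "1 \<le> exp (4*a*t) * exp (- (4*a) * psums v n)"
          by (simp add: mult_exp_exp)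
        then show ?thesis using True unfolding pe
          by (simp add: ennreal_mult[symmetric])
      qed simp
    qed
    also have "\<dots> = ennreal (exp (4*a*t)) * (\<integral>\<^sup>+v. ennreal (\<Prod>k<n. exp (- (4*a) * v k)) \<partial>pi_a a)"
      by (rule nn_integral_cmult) (unfold pi_a_def, measurable)
    also have "\<dots> = ennreal (exp (4*a*t)) * ennreal (\<Prod>k<n. (2 + real (Suc k) * a) / ((2 + real (Suc k) * a) + 4 * a))"
      using a by (subst pi_a_laplace) auto
    also have "\<dots> = ennreal (exp (4*a*t) * (\<Prod>k<n. (2 + real (Suc k) * a) / ((2 + real (Suc k) * a) + 4 * a)))"
      using a by (simp add: ennreal_mult[symmetric] prod_nonneg add_nonneg_nonneg)
    finally have em: "emeasure (pi_a a) A \<le> ennreal (exp (4*a*t) * (\<Prod>k<n. (2 + real (Suc k) * a) / ((2 + real (Suc k) * a) + 4 * a)))" .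
    have et: "exp (4*a*t) = (real n)\<^sup>2"
    proof -
      have "4*a*t = ln (real n) + ln (real n)" unfolding t_def using a by simp
      then have "exp (4*a*t) = exp (ln (real n)) * exp (ln (real n))" by (metis exp_add)
      then show ?thesis using n by (simp add: power2_eq_square)
    qed
    have d: "real n * a \<le> 2 + real (n+j) * a" for j
      using a by (simp add: algebra_simps add_nonneg_nonneg)
    have npos: "0 < real n * a" using a n by simp
    have p: "0 < 2 + real j * a" for j using a by (simp add: add_pos_nonneg)
    have den: "(real n * a)^4 \<le> (2 + real (n+1) * a) * (2 + real (n+2) * a) * (2 + real (n+3) * a) * (2 + real (n+4) * a)"
    proof -
      have "(real n * a)^4 = (real n * a) * (real n * a) * (real n * a) * (real n * a)" by (simp add: power4_eq_xxxx)
      also have "\<dots> \<le> (2 + real (n+1) * a) * (2 + real (n+2) * a) * (2 + real (n+3) * a) * (2 + real (n+4) * a)"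
        using npos d[of 1] d[of 2] d[of 3] d[of 4]
        by (intro mult_mono) (auto intro: mult_nonneg_nonneg)
      finally show ?thesis .
    qed
    have Dpos: "0 < (2 + real (n+1) * a) * (2 + real (n+2) * a) * (2 + real (n+3) * a) * (2 + real (n+4) * a)"
      by (intro mult_pos_pos p)
    have Xpos: "0 < (real n * a)^4" using npos by (rule zero_less_power)
    have numpos: "0 \<le> (2 + 1*a) * (2 + 2*a) * (2 + 3*a) * (2 + 4*a)" using a by simp
    have bound: "exp (4*a*t) * (\<Prod>k<n. (2 + real (Suc k) * a) / ((2 + real (Suc k) * a) + 4 * a)) \<le> K / (real n)\<^sup>2"
    proof -
      have "(\<Prod>k<n. (2 + real (Suc k) * a) / ((2 + real (Suc k) * a) + 4 * a))
          \<le> ((2 + 1*a) * (2 + 2*a) * (2 + 3*a) * (2 + 4*a)) / (real n * a)^4"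
        unfolding telescope[OF a]
        by (rule divide_left_mono[OF den numpos], rule mult_pos_pos[OF Dpos Xpos])
      also have "\<dots> = K / (real n)^4" unfolding K_def by (simp add: power_mult_distrib divide_divide_eq_left ac_simps)
      finally have "(real n)\<^sup>2 * (\<Prod>k<n. (2 + real (Suc k) * a) / ((2 + real (Suc k) * a) + 4 * a)) \<le> (real n)\<^sup>2 * (K / (real n)^4)"
        by (rule mult_left_mono) simp
      also have "\<dots> = K / (real n)\<^sup>2"
      proof -
        have gen: "(y::real) \<noteq> 0 \<Longrightarrow> y * (K / (y*y)) = K / y" for y by (simp add: field_simps)
        have n4: "(real n)^4 = (real n)^2 * (real n)^2" by (simp add: power_add[symmetric])
        show ?thesis unfolding n4 by (rule gen) (use n in simp)
      qed
      finally show ?thesis unfolding et .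
    qed
    have "measure (pi_a a) A \<le> K / (real n)\<^sup>2"
    proof -
      have B0: "0 \<le> exp (4*a*t) * (\<Prod>k<n. (2 + real (Suc k) * a) / ((2 + real (Suc k) * a) + 4 * a))"
        using a by (intro mult_nonneg_nonneg prod_nonneg divide_nonneg_nonneg) (auto intro!: add_nonneg_nonneg)
      have "ennreal (measure (pi_a a) A) \<le> ennreal (exp (4*a*t) * (\<Prod>k<n. (2 + real (Suc k) * a) / ((2 + real (Suc k) * a) + 4 * a)))"
        using em N.emeasure_eq_measure by simp
      then have "measure (pi_a a) A \<le> exp (4*a*t) * (\<Prod>k<n. (2 + real (Suc k) * a) / ((2 + real (Suc k) * a) + 4 * a))"
        using B0 by (simp add: ennreal_le_iff)
      then show ?thesis using bound by linarith
    qed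
    then show ?thesis unfolding A_def t_def .
  qed
  then show ?thesis by blast
qed

lemma pi_a_AE:
  fixes a :: real
  assumes a: "a > 0"
  shows "AE v in pi_a a. eventually (\<lambda>n. ln (real n) / (2 * a) < psums v n) sequentially"
proof -
  interpret N: prob_space "pi_a a" by (rule pi_a_prob[OF a])
  obtain K where K: "\<And>n. n \<ge> 1 \<Longrightarrow> measure (pi_a a) {v \<in> space (pi_a a). psums v n \<le> ln (real n) / (2 * a)} \<le> K / (real n)\<^sup>2"
    using pi_a_tail[OF a] by blast
  define A where "A = (\<lambda>n. {v \<in> space (pi_a a). psums v n \<le> ln (real n) / (2 * a)})"
  have Am: "A n \<in> sets (pi_a a)" for n
    unfolding A_def psums_def pi_a_def by measurable
  have sg: "summable (\<lambda>n. K / (real n)\<^sup>2)"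
  proof -
    have "summable (\<lambda>n. K * inverse (real n ^ 2))"
      by (intro summable_mult inverse_power_summable) simp
    then show ?thesis by (simp only: divide_inverse)
  qed
  have sm: "summable (\<lambda>n. measure (pi_a a) (A n))"
  proof (rule summable_comparison_test'[OF sg, of 1])
    fix n :: nat assume "n \<ge> 1"
    then show "norm (measure (pi_a a) (A n)) \<le> K / (real n)\<^sup>2"
      unfolding A_def real_norm_def abs_of_nonneg[OF measure_nonneg] by (rule K)
  qed
  have "AE v in pi_a a. eventually (\<lambda>n. v \<in> space (pi_a a) - A n) sequentially"
    by (rule borel_cantelli_AE1[OF Am _ sm]) (simp add: N.emeasure_finite less_top[symmetric])
  then show ?thesis
    by (rule AE_mp) (auto simp: A_def elim!: eventually_mono intro!: AE_I2)
qed

lemma eventually_lnln: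
  fixes c :: real
  shows "eventually (\<lambda>d::nat. c \<le> ln (ln (real d)) \<and> 0 < ln (real d) \<and> 0 < ln (ln (real d))) sequentially"
proof -
  define E where "E = exp (exp (max c 1))"
  have "eventually (\<lambda>d::nat. real d \<ge> E) sequentially"
    by (rule eventually_sequentiallyI[of "nat \<lceil>E\<rceil>"]) linarith
  then show ?thesis
  proof (rule eventually_mono)
    fix d :: nat assume d: "E \<le> real d"
    have E1: "exp (max c 1) > 0" by simp
    have Epos: "0 < E" unfolding E_def by simp
    then have dpos: "0 < real d" using d by linarith
    have "ln E \<le> ln (real d)" using d Epos dpos by simp
    then have l1: "exp (max c 1) \<le> ln (real d)" unfolding E_def by simp
    then have lpos: "0 < ln (real d)" using E1 by linarith
    have "ln (exp (max c 1)) \<le> ln (ln (real d))" using ln_le_cancel_iff[OF E1 lpos] l1 by blast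
    then have "max c 1 \<le> ln (ln (real d))" by simp
    then show "c \<le> ln (ln (real d)) \<and> 0 < ln (real d) \<and> 0 < ln (ln (real d))"
      using lpos by linarith
  qed
qed

lemma det_bound:
  fixes u v :: "nat \<Rightarrow> real" and a :: real
  assumes a: "a > 0"
    and ev: "eventually (\<lambda>n. ln (real n) / (2 * a) < psums v n) sequentially"
    and lim: "limsup (\<lambda>d. ereal (ln (ln (real d)) / ln (real d) * (\<Sum>n<d. \<bar>v n - u n\<bar>))) = 0"
  shows "eventually (\<lambda>n. ln (real n) / (4 * a) \<le> psums u n
      \<and> ln (real n) / (4 * a) \<le> psums (\<lambda>k. min (u k) (v k)) n
      \<and> ln (real n) / (4 * a) \<le> psums v n) sequentially"
proof -
  have "eventually (\<lambda>d. ereal (ln (ln (real d)) / ln (real d) * (\<Sum>n<d. \<bar>v n - u n\<bar>)) < 1) sequentially"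
    by (rule Limsup_lessD, subst lim, simp)
  then have e1: "eventually (\<lambda>d. ln (ln (real d)) / ln (real d) * (\<Sum>n<d. \<bar>v n - u n\<bar>) < 1) sequentially"
    by simp
  show ?thesis
    using e1 ev eventually_lnln[of "4 * a"]
  proof eventually_elim
    case (elim d)
    define L where "L = ln (real d)"
    define D where "D = (\<Sum>n<d. \<bar>v n - u n\<bar>)"
    have L: "0 < L" "4 * a \<le> ln L" "0 < ln L" using elim(3) unfolding L_def by auto
    have D0: "0 \<le> D" unfolding D_def by (simp add: sum_nonneg)
    have "ln L / L * D < 1" using elim(1) unfolding L_def D_def .
    then have "ln L * D < L" using L by (simp add: field_simps)
    moreover have "4 * a * D \<le> ln L * D" using L D0 by (intro mult_right_mono) auto
    ultimately have "4 * a * D < L" by linarith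
    then have DL: "D < L / (4 * a)" using a by (simp add: field_simps)
    have vL: "L / (2 * a) < psums v d" using elim(2) unfolding L_def .
    have half: "L / (2 * a) = L / (4 * a) + L / (4 * a)" using a by (simp add: field_simps)
    have u: "psums v d - D \<le> psums u d"
    proof -
      have "psums v d - psums u d = (\<Sum>n<d. v n - u n)" unfolding psums_def by (simp add: sum_subtractf)
      also have "\<dots> \<le> D" unfolding D_def by (rule sum_mono) simp
      finally show ?thesis by linarith
    qed
    have m: "psums v d - D \<le> psums (\<lambda>k. min (u k) (v k)) d"
    proof -
      have "psums v d - psums (\<lambda>k. min (u k) (v k)) d = (\<Sum>n<d. v n - min (u n) (v n))" unfolding psums_def by (simp add: sum_subtractf)
      also have "\<dots> \<le> D" unfolding D_def by (rule sum_mono) simp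
      finally show ?thesis by linarith
    qed
    have "0 \<le> L / (4 * a)" using L a by simp
    then show ?case using u m vL DL half unfolding L_def by linarith
  qed
qed

lemma gauss_from_log:
  fixes y :: "nat \<Rightarrow> real" and a :: real
  assumes a: "a > 0" and ev: "eventually (\<lambda>n. ln (real n) / (4 * a) \<le> y n) sequentially"
  shows "gauss_summable y"
  unfolding gauss_summable_def
proof (intro allI impI)
  fix \<alpha> :: real assume al: "\<alpha> > 0"
  define \<beta> where "\<beta> = \<alpha> / (16 * a\<^sup>2)"
  have b: "\<beta> > 0" unfolding \<beta>_def using al a by simp
  obtain N1 where N1: "\<And>n. n \<ge> N1 \<Longrightarrow> ln (real n) / (4 * a) \<le> y n"
    using ev unfolding eventually_sequentially by blast
  define N where "N = max (max N1 1) (nat \<lceil>exp (2 / \<beta>)\<rceil>)"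
  have sg: "summable (\<lambda>n. inverse (real n ^ 2))"
    by (rule inverse_power_summable) simp
  show "summable (\<lambda>i. exp (- \<alpha> * (y i)\<^sup>2))"
  proof (rule summable_comparison_test'[OF sg, of N])
    fix n assume n: "N \<le> n"
    then have n1: "n \<ge> N1" "n \<ge> 1" "real n \<ge> exp (2 / \<beta>)" unfolding N_def by linarith+
    have npos: "0 < real n" using n1 by simp
    have ln0: "0 \<le> ln (real n)" using n1 by simp
    have lnb: "2 / \<beta> \<le> ln (real n)"
      using n1(3) npos by (metis exp_gt_zero ln_exp ln_le_cancel_iff)
    then have lnb2: "2 \<le> \<beta> * ln (real n)" using b by (simp add: field_simps)
    have q0: "0 \<le> ln (real n) / (4 * a)" using ln0 a by simp
    have "(ln (real n) / (4 * a))\<^sup>2 \<le> (y n)\<^sup>2"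
      using N1[OF n1(1)] q0 by (intro power_mono) auto
    then have "\<alpha> * (ln (real n) / (4 * a))\<^sup>2 \<le> \<alpha> * (y n)\<^sup>2" using al by (intro mult_left_mono) auto
    moreover have "\<alpha> * (ln (real n) / (4 * a))\<^sup>2 = \<beta> * ln (real n) * ln (real n)"
      unfolding \<beta>_def using a by (simp add: power2_eq_square field_simps)
    moreover have "2 * ln (real n) \<le> \<beta> * ln (real n) * ln (real n)"
      using lnb2 ln0 by (intro mult_right_mono) auto
    ultimately have "- \<alpha> * (y n)\<^sup>2 \<le> - (ln (real n) + ln (real n))" by linarith
    then have "exp (- \<alpha> * (y n)\<^sup>2) \<le> exp (- (ln (real n) + ln (real n)))" by simp
    also have "\<dots> = inverse (real n ^ 2)"
    proof -
      have "exp (- (ln (real n) + ln (real n))) = inverse (exp (ln (real n)) * exp (ln (real n)))"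
        by (simp only: exp_minus exp_add)
      then show ?thesis using npos by (simp add: power2_eq_square)
    qed
    finally show "norm (exp (- \<alpha> * (y n)\<^sup>2)) \<le> inverse (real n ^ 2)" by simp
  qed
qed

theorem mainTheorem10:
  fixes a :: real and \<mu> :: "(nat \<Rightarrow> real) measure"
    and M :: "'w measure" and U V :: "'w \<Rightarrow> nat \<Rightarrow> real"
  assumes a_pos: "a > 0"
    and mu_prob: "prob_space \<mu>" and mu_sets: "sets \<mu> = sets seq_space"
    and mu_nonneg: "AE v in \<mu>. \<forall>n. 0 \<le> v n"
    and M_prob: "prob_space M"
    and U_meas: "U \<in> measurable M seq_space" and V_meas: "V \<in> measurable M seq_space"
    and U_law: "distr M seq_space U = \<mu>" and V_law: "distr M seq_space V = pi_a a"
    and H1: "AE \<omega> in M. limsup (\<lambda>d. ereal (ln (ln (real d)) / ln (real d)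
                 * (\<Sum>n<d. \<bar>V \<omega> n - U \<omega> n\<bar>))) = 0"
    and H2: "AE \<omega> in M. limsup (\<lambda>d. ereal (U \<omega> (d - 1) / (real d * V \<omega> (d - 1)))) < \<infinity>"
  shows "(AE \<omega> in M. \<exists>i0\<ge>2. \<forall>i\<ge>i0. psums (U \<omega>) i \<ge> ln (real i) / (4 * a))
       \<and> (AE \<omega> in M. gauss_summable (psums (U \<omega>))
             \<and> gauss_summable (psums (\<lambda>n. min (U \<omega> n) (V \<omega> n)))
             \<and> gauss_summable (psums (V \<omega>)))
       \<and> class_S \<mu>"
proof -
  have AV: "AE \<omega> in M. eventually (\<lambda>n. ln (real n) / (2 * a) < psums (V \<omega>) n) sequentially"
    using pi_a_AE[OF a_pos] unfolding V_law[symmetric] by (rule AE_distrD[OF V_meas])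
  have ALL: "AE \<omega> in M. eventually (\<lambda>n. ln (real n) / (4 * a) \<le> psums (U \<omega>) n
      \<and> ln (real n) / (4 * a) \<le> psums (\<lambda>k. min (U \<omega> k) (V \<omega> k)) n
      \<and> ln (real n) / (4 * a) \<le> psums (V \<omega>) n) sequentially"
    using AV H1 by eventually_elim (rule det_bound[OF a_pos])
  have P1: "AE \<omega> in M. \<exists>i0\<ge>2. \<forall>i\<ge>i0. psums (U \<omega>) i \<ge> ln (real i) / (4 * a)"
    using ALL
  proof eventually_elim
    case (elim \<omega>)
    then obtain N where "\<And>i. i \<ge> N \<Longrightarrow> ln (real i) / (4 * a) \<le> psums (U \<omega>) i"
      unfolding eventually_sequentially by blast
    then show ?case by (intro exI[of _ "max N 2"]) auto
  qed
  have P2: "AE \<omega> in M. gauss_summable (psums (U \<omega>))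
             \<and> gauss_summable (psums (\<lambda>n. min (U \<omega> n) (V \<omega> n)))
             \<and> gauss_summable (psums (V \<omega>))"
    using ALL
  proof eventually_elim
    case (elim \<omega>)
    have e1: "eventually (\<lambda>n. ln (real n) / (4 * a) \<le> psums (U \<omega>) n) sequentially"
      using elim by (rule eventually_mono) simp
    have e2: "eventually (\<lambda>n. ln (real n) / (4 * a) \<le> psums (\<lambda>k. min (U \<omega> k) (V \<omega> k)) n) sequentially"
      using elim by (rule eventually_mono) simp
    have e3: "eventually (\<lambda>n. ln (real n) / (4 * a) \<le> psums (V \<omega>) n) sequentially"
      using elim by (rule eventually_mono) simp
    show ?case using gauss_from_log[OF a_pos e1] gauss_from_log[OF a_pos e2] gauss_from_log[OF a_pos e3] by simp
  qed
  define Q where "Q = (\<lambda>v::nat \<Rightarrow> real. \<exists>N. \<forall>i\<ge>N. ln (real i) / (4 * a) \<le> psums v i)"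
  have Qm: "{v \<in> space seq_space. Q v} \<in> sets seq_space"
    unfolding Q_def psums_def seq_space_def by measurable
  have "AE \<omega> in M. Q (U \<omega>)"
    using ALL
  proof eventually_elim
    case (elim \<omega>)
    then show ?case unfolding Q_def eventually_sequentially by (auto elim!: all_forward)
  qed
  then have "AE v in distr M seq_space U. Q v"
    by (subst AE_distr_iff[OF U_meas Qm])
  then have AQ: "AE v in \<mu>. Q v" unfolding U_law .
  have P3: "class_S \<mu>"
    unfolding class_S_def
  proof (intro conjI mu_prob mu_sets)
    show "AE v in \<mu>. (\<forall>n. 0 \<le> v n) \<and> gauss_summable (psums v)"
      using AQ mu_nonneg
    proof eventually_elim
      case (elim v)
      then have "eventually (\<lambda>n. ln (real n) / (4 * a) \<le> psums v n) sequentially"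
        unfolding Q_def eventually_sequentially by blast
      then show ?case using gauss_from_log[OF a_pos] elim by blast
    qed
  qed
  show ?thesis using P1 P2 P3 by blast
qed

end
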